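(* If $f:2^\omega\to\mathbb R$ is continuous and $g:2^\omega\to\mathbb R$ is non-constant, then $f\le_{\mathbf m} g$.
   Context: Questions: for $y\in\mathbb R$, $p\in\mathbb Q$, $\varepsilon\in\mathbb Q^+$, a bit $b\in\{0,1\}$ is a correct answer to "$y\lesssim_\varepsilon p$" if either $b=1$ and $y<p+\varepsilon$, or $b=0$ and $y>p-\varepsilon$. $f\le_{\mathbf m} g$ means: for every $p\in\mathbb Q,\varepsilon\in\mathbb Q^+$ there are $q\in\mathbb Q,\delta\in\mathbb Q^+$ and a continuous $k:2^\omega\to2^\omega$ such that for every $A\in2^\omega$, every correct answer to $g(k(A))\lesssim_\delta q$ is a correct answer to $f(A)\lesssim_\varepsilon p$. *)

theory Defs
  imports "HOL-Analysis.Analysis"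
begin

text \<open>Cantor space 2^omega is the type nat \<Rightarrow> bool with the product topology
(library instance for function spaces; bool carries its order topology, which is discrete).\<close>

type_synonym cantor = "nat \<Rightarrow> bool"

definition correct_answer :: "real \<Rightarrow> rat \<Rightarrow> rat \<Rightarrow> bool \<Rightarrow> bool" where
  "correct_answer y p eps b \<longleftrightarrow>
     (b \<and> y < real_of_rat p + real_of_rat eps) \<or> (\<not> b \<and> y > real_of_rat p - real_of_rat eps)"

definition m_reducible :: "(cantor \<Rightarrow> real) \<Rightarrow> (cantor \<Rightarrow> real) \<Rightarrow> bool" where
  "m_reducible f g \<longleftrightarrow>
     (\<forall>p eps. eps > 0 \<longrightarrow>
        (\<exists>q \<delta> (k :: cantor \<Rightarrow> cantor). \<delta> > 0 \<and> continuous_on UNIV k \<and>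
           (\<forall>A b. correct_answer (g (k A)) q \<delta> b \<longrightarrow> correct_answer (f A) p eps b)))"

end

theory Submission imports Defs begin

definition cyl :: "cantor \<Rightarrow> nat \<Rightarrow> cantor set" where
  "cyl A n = {B. \<forall>i<n. B i = A i}"

lemma open_cyl: "open (cyl A n)"
proof -
  have "cyl A n = (\<Inter>i\<in>{..<n}. (\<lambda>B. B i) -` {A i})" unfolding cyl_def by auto
  moreover have "open ((\<lambda>B::cantor. B i) -` {A i})" for i
    by (rule open_vimage[OF open_discrete continuous_on_product_coordinates])
  ultimately show ?thesis by auto
qed

lemma cyl_nbhd:
  assumes "open U" "x \<in> U"
  shows "\<exists>n. cyl x n \<subseteq> U"
proof -
  have "openin (product_topology (\<lambda>i. euclidean) UNIV) U" "x \<in> U"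
    using assms unfolding open_fun_def by auto
  from product_topology_open_contains_basis[OF this]
  obtain X where H: "x \<in> (\<Pi>\<^sub>E i\<in>UNIV. X i)" "finite {i. X i \<noteq> UNIV}" "(\<Pi>\<^sub>E i\<in>UNIV. X i) \<subseteq> U"
    by auto
  obtain n where n: "\<forall>i\<in>{i. X i \<noteq> UNIV}. i < n"
    using H(2) by (meson finite_nat_set_iff_bounded)
  have "cyl x n \<subseteq> (\<Pi>\<^sub>E i\<in>UNIV. X i)"
  proof
    fix B assume B: "B \<in> cyl x n"
    show "B \<in> (\<Pi>\<^sub>E i\<in>UNIV. X i)"
    proof (clarsimp simp: PiE_iff)
      fix i show "B i \<in> X i"
        using n B H(1) unfolding cyl_def by (cases "X i = UNIV") auto
    qed
  qed
  then show ?thesis using H(3) by blast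
qed

lemma compact_cantor: "compact (UNIV :: cantor set)"
proof -
  have "compact_space (product_topology (\<lambda>i::nat. (euclidean :: bool topology)) UNIV)"
  proof -
    have "compact (UNIV :: bool set)" by (simp add: finite_imp_compact)
    then have "compact_space (euclidean :: bool topology)"
      by (simp add: compact_space_def compactin_euclidean_iff)
    then show ?thesis by (simp add: compact_space_product_topology)
  qed
  then have "compactin (product_topology (\<lambda>i::nat. (euclidean :: bool topology)) UNIV) UNIV"
    using compact_space_def[of "product_topology (\<lambda>i::nat. (euclidean :: bool topology)) UNIV"]
    by (simp add: topspace_product_topology)
  then show ?thesis
    by (simp add: euclidean_product_topology compactin_euclidean_iff)
qed

definition trunc :: "nat \<Rightarrow> cantor \<Rightarrow> cantor" where
  "trunc N B = (\<lambda>i. if i < N then B i else False)"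

lemma unif:
  fixes f :: "cantor \<Rightarrow> real"
  assumes f: "continuous_on UNIV f" and e: "e > 0"
  shows "\<exists>N. \<forall>B. \<bar>f B - f (trunc N B)\<bar> < e"
proof -
  have ex: "\<forall>A. \<exists>n. cyl A n \<subseteq> f -` ball (f A) (e/2)"
  proof
    fix A
    show "\<exists>n. cyl A n \<subseteq> f -` ball (f A) (e/2)"
      by (rule cyl_nbhd) (auto intro: open_vimage[OF open_ball f] simp: e)
  qed
  from choice[OF ex] obtain n where n0: "\<forall>A. cyl A (n A) \<subseteq> f -` ball (f A) (e/2)" ..
  then have n: "\<And>A. cyl A (n A) \<subseteq> f -` ball (f A) (e/2)" by blast
  have cov: "UNIV \<subseteq> \<Union>((\<lambda>A. cyl A (n A)) ` UNIV)" unfolding cyl_def by auto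
  obtain T where T: "finite T" "UNIV \<subseteq> \<Union>((\<lambda>A. cyl A (n A)) ` T)"
    by (rule compactE_image[OF compact_cantor, of UNIV "\<lambda>A. cyl A (n A)"]) (auto simp: open_cyl cov)
  define N where "N = (\<Sum>A\<in>T. n A)"
  have "\<bar>f B - f (trunc N B)\<bar> < e" for B
  proof -
    obtain A where A: "A \<in> T" "B \<in> cyl A (n A)" using T(2) by blast
    have le: "n A \<le> N" unfolding N_def using A(1) T(1) by (simp add: member_le_sum)
    have "trunc N B \<in> cyl A (n A)" using A(2) le unfolding cyl_def trunc_def by auto
    then have "dist (f (trunc N B)) (f A) < e/2" using n[of A] by (auto simp: dist_commute)
    moreover have "dist (f B) (f A) < e/2" using n[of A] A(2) by (auto simp: dist_commute)
    ultimately show ?thesis by (simp add: dist_real_def abs_if split: if_splits)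
  qed
  then show ?thesis by blast
qed

theorem mainTheorem18:
  fixes f g :: "cantor \<Rightarrow> real"
  assumes "continuous_on UNIV f"
    and "\<exists>A B. g A \<noteq> g B"
  shows "m_reducible f g"
proof -
  obtain A0 B0 where AB: "g A0 < g B0"
  proof -
    obtain A B where "g A \<noteq> g B" using assms(2) by blast
    then consider "g A < g B" | "g B < g A" by linarith
    then show ?thesis using that by cases auto
  qed
  obtain q where q: "g A0 < of_rat q" "of_rat q < g B0" using of_rat_dense[OF AB] by blast
  have "0 < min (of_rat q - g A0) (g B0 - of_rat q)" using q by simp
  then obtain d where d: "0 < (of_rat d :: real)" "of_rat d < min (of_rat q - g A0) (g B0 - of_rat q)"
    using of_rat_dense[OF \<open>0 < min (of_rat q - g A0) (g B0 - of_rat q)\<close>] by blast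
  show ?thesis unfolding m_reducible_def
  proof (intro allI impI)
    fix p eps :: rat assume eps: "eps > 0"
    obtain N where N: "\<And>B. \<bar>f B - f (trunc N B)\<bar> < of_rat eps"
      using unif[OF assms(1), of "of_rat eps"] eps by auto
    define C where "C = {A. f (trunc N A) < of_rat p}"
    define k where "k = (\<lambda>A. if A \<in> C then A0 else B0)"
    have tr: "B \<in> cyl A N \<Longrightarrow> trunc N B = trunc N A" for A B
      unfolding cyl_def trunc_def by auto
    have oC: "open C"
    proof -
      have "B \<in> C" if "A \<in> C" "B \<in> cyl A N" for A B
        using tr[OF that(2)] that(1) unfolding C_def by simp
      moreover have "A \<in> cyl A N" for A unfolding cyl_def by simp
      ultimately have eq: "C = (\<Union>A\<in>C. cyl A N)" by blast
      have "open (\<Union>A\<in>C. cyl A N)" by (intro open_UN ballI open_cyl)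
      then show ?thesis using eq by simp
    qed
    have oC': "open (- C)"
    proof -
      have "B \<in> - C" if "A \<in> - C" "B \<in> cyl A N" for A B
        using tr[OF that(2)] that(1) unfolding C_def by simp
      moreover have "A \<in> cyl A N" for A unfolding cyl_def by simp
      ultimately have eq: "- C = (\<Union>A\<in>- C. cyl A N)" by blast
      have "open (\<Union>A\<in>- C. cyl A N)" by (intro open_UN ballI open_cyl)
      then show ?thesis using eq by simp
    qed
    have "continuous_on UNIV k"
      unfolding continuous_on_open_vimage[OF open_UNIV]
    proof (intro allI impI)
      fix S :: "cantor set" assume "open S"
      have "k -` S \<inter> UNIV = (if A0 \<in> S then C else {}) \<union> (if B0 \<in> S then - C else {})"
        unfolding k_def by auto
      then show "open (k -` S \<inter> UNIV)" using oC oC' by auto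
    qed
    moreover have "correct_answer (f A) p eps b" if "correct_answer (g (k A)) q d b" for A b
    proof (cases "A \<in> C")
      case True
      have kA: "k A = A0" using True unfolding k_def by simp
      have lt: "g A0 < of_rat q - of_rat d" using d(2) by simp
      have "b"
      proof (rule ccontr)
        assume "\<not> b"
        then have "g A0 > of_rat q - of_rat d" using that kA unfolding correct_answer_def by simp
        then show False using lt by linarith
      qed
      moreover have "f A < of_rat p + of_rat eps" using N[of A] True unfolding C_def by auto
      ultimately show ?thesis unfolding correct_answer_def by auto
    next
      case False
      have kA: "k A = B0" using False unfolding k_def by simp
      have lt: "g B0 > of_rat q + of_rat d" using d(2) by simp
      have "\<not> b"
      proof
        assume "b"
        then have "g B0 < of_rat q + of_rat d" using that kA unfolding correct_answer_def by simp
        then show False using lt by linarith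
      qed
      moreover have "f A > of_rat p - of_rat eps" using N[of A] False unfolding C_def by auto
      ultimately show ?thesis unfolding correct_answer_def by auto
    qed
    ultimately show "\<exists>q \<delta> k. \<delta> > 0 \<and> continuous_on UNIV k \<and>
           (\<forall>A b. correct_answer (g (k A)) q \<delta> b \<longrightarrow> correct_answer (f A) p eps b)"
      by (intro exI[of _ q] exI[of _ d] exI[of _ k]) (use d(1) in simp)
  qed
qed

end
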